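(* Let $\mathcal B_{\mathcal S}$ be the set of partitions $\beta_1+\cdots+\beta_n$ ($0<\beta_1\le\cdots\le\beta_n$) with $\beta_1\in\{1,2,3\}$ and, for each $2\le i\le n$: if $3\nmid\beta_i$ then $3\le\beta_i-\beta_{i-1}\le5$, and if $3\mid\beta_i$ then $4\le\beta_i-\beta_{i-1}\le6$. For a partition $\beta$ let $w(\beta)=u^{a(\beta)}v^{c(\beta)}q^{|\beta|}$, where $a(\beta)$ is the number of parts congruent to $0$ or $1$ mod $3$ and $c(\beta)$ is the number of parts congruent to $0$ or $2$ mod $3$. Let $b_{\mathcal S}(n)=\sum w(\beta)$ over $\beta\in\mathcal B_{\mathcal S}$ with exactly $n$ parts ($b_{\mathcal S}(0)=1$). Then, as formal power series in $q$ with coefficients polynomials in $u,v$, $$\sum_{n\ge0}\frac{b_{\mathcal S}(n)}{(q^3;q^3)_n}=(-uq;q^3)_\infty(-vq^2;q^3)_\infty=\prod_{j\ge1}(1+uq^{3j-2})(1+vq^{3j-1}).$$ Equivalently, the sum of $w(\pi)$ over all partitions $\pi$ whose consecutive parts differ by at least $3$, with difference at least $4$ whenever one of the two parts is divisible by $3$, equals $\prod_{j\ge1}(1+uq^{3j-2})(1+vq^{3j-1})$.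
   Context: $(a;q)_n=\prod_{j=0}^{n-1}(1-aq^j)$, $(a;q)_\infty=\prod_{j\ge0}(1-aq^j)$, $|\beta|$ is the sum of the parts. *)

theory Defs
  imports "HOL-Analysis.Analysis" "HOL-Computational_Algebra.Formal_Power_Series"
begin

text \<open>Partitions are represented as lists of parts in nondecreasing order
  (beta_1 \<le> ... \<le> beta_n, list index i corresponds to beta_(i+1)).\<close>

definition in_BS :: "nat list \<Rightarrow> bool" where
  "in_BS \<beta> \<longleftrightarrow> sorted \<beta> \<and> (\<forall>x\<in>set \<beta>. 0 < x) \<and>
     (\<beta> \<noteq> [] \<longrightarrow> \<beta> ! 0 \<in> {1,2,3}) \<and>
     (\<forall>i. 1 \<le> i \<and> i < length \<beta> \<longrightarrow>
        (\<not> 3 dvd \<beta> ! i \<longrightarrow> 3 \<le> \<beta> ! i - \<beta> ! (i-1) \<and> \<beta> ! i - \<beta> ! (i-1) \<le> 5) \<and>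
        (3 dvd \<beta> ! i \<longrightarrow> 4 \<le> \<beta> ! i - \<beta> ! (i-1) \<and> \<beta> ! i - \<beta> ! (i-1) \<le> 6))"

definition cnt_a :: "nat list \<Rightarrow> nat" where
  "cnt_a \<beta> = length (filter (\<lambda>x. x mod 3 = 0 \<or> x mod 3 = 1) \<beta>)"

definition cnt_c :: "nat list \<Rightarrow> nat" where
  "cnt_c \<beta> = length (filter (\<lambda>x. x mod 3 = 0 \<or> x mod 3 = 2) \<beta>)"

definition bS :: "'a::comm_ring_1 \<Rightarrow> 'a \<Rightarrow> nat \<Rightarrow> 'a fps" where
  "bS u v n = Abs_fps (\<lambda>N. \<Sum>\<beta>\<in>{\<beta>. in_BS \<beta> \<and> length \<beta> = n \<and> sum_list \<beta> = N}.
       u ^ cnt_a \<beta> * v ^ cnt_c \<beta>)"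

definition q3poch :: "nat \<Rightarrow> 'a::comm_ring_1 fps" where
  "q3poch n = (\<Prod>j<n. 1 - fps_X ^ (3 * (j + 1)))"

end

theory Submission
  imports Defs
begin

no_notation vec_nth (infixl \<open>$\<close> 90)
notation fps_nth (infixl \<open>$\<close> 75)

section \<open>Congruence modulo X^(N+1)\<close>

definition eqN :: "nat \<Rightarrow> 'a::comm_ring_1 fps \<Rightarrow> 'a fps \<Rightarrow> bool" where
  "eqN N f g \<longleftrightarrow> (\<forall>n\<le>N. f $ n = g $ n)"

lemma eqN_refl[simp]: "eqN N f f" by (simp add: eqN_def)
lemma eqN_sym: "eqN N f g \<Longrightarrow> eqN N g f" by (simp add: eqN_def)
lemma eqN_trans: "eqN N f g \<Longrightarrow> eqN N g h \<Longrightarrow> eqN N f h" by (simp add: eqN_def)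
lemma eqN_add: "eqN N f g \<Longrightarrow> eqN N f' g' \<Longrightarrow> eqN N (f + f') (g + g')"
  by (simp add: eqN_def)
lemma eqN_diff: "eqN N f g \<Longrightarrow> eqN N f' g' \<Longrightarrow> eqN N (f - f') (g - g')"
  by (simp add: eqN_def)
lemma eqN_mult: "eqN N f g \<Longrightarrow> eqN N f' g' \<Longrightarrow> eqN N (f * f') (g * g')"
  unfolding eqN_def fps_mult_nth by (auto intro!: sum.cong)
lemma eqN_sum: "(\<And>i. i \<in> A \<Longrightarrow> eqN N (f i) (g i)) \<Longrightarrow> eqN N (sum f A) (sum g A)"
  unfolding eqN_def by (simp add: fps_sum_nth)
lemma eqN_prod: "(\<And>i. i \<in> A \<Longrightarrow> eqN N (f i) (g i)) \<Longrightarrow> eqN N (prod f A) (prod g A)"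
proof (induction A rule: infinite_finite_induct)
  case (insert x F)
  then show ?case by (simp add: eqN_mult)
qed auto
lemma eqN_prod1: "(\<And>i. i \<in> A \<Longrightarrow> eqN N (f i) 1) \<Longrightarrow> eqN N (prod f A) 1"
  using eqN_prod[of A N f "\<lambda>_. 1"] by simp
lemma eqN_Xpow: "N < d \<Longrightarrow> eqN N (fps_X ^ d * f) 0"
  unfolding eqN_def by (simp add: fps_X_power_mult_nth)

lemma eqN_cong_left: "eqN N f g \<Longrightarrow> eqN N f' g \<Longrightarrow> eqN N f f'"
  by (simp add: eqN_def)

section \<open>q-Pochhammer, q-binomials\<close>

definition iv :: "nat \<Rightarrow> 'a::field fps" where "iv n = inverse (q3poch n)"

lemma q3poch_0[simp]: "q3poch 0 = 1" by (simp add: q3poch_def)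
lemma q3poch_Suc: "q3poch (Suc n) = q3poch n * (1 - fps_X ^ (3 * Suc n))"
  by (simp add: q3poch_def)
lemma q3poch_nth0[simp]: "q3poch n $ 0 = (1::'a::comm_ring_1)"
  by (induction n) (simp_all add: q3poch_Suc)

lemma iv_mult[simp]: "iv n * q3poch n = (1::'a::field fps)"
  unfolding iv_def by (rule inverse_mult_eq_1) simp
lemma mult_iv[simp]: "q3poch n * iv n = (1::'a::field fps)"
  using iv_mult[of n] by (simp add: mult.commute)
lemma iv_0[simp]: "iv 0 = 1" by (simp add: iv_def)

lemma iv_Suc: "iv (Suc n) * (1 - fps_X ^ (3 * Suc n)) = (iv n :: 'a::field fps)"
proof -
  have "iv (Suc n) * (1 - fps_X ^ (3 * Suc n)) * q3poch n = (1::'a fps)"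
    using iv_mult[of "Suc n"] by (simp add: q3poch_Suc mult_ac)
  hence "iv (Suc n) * (1 - fps_X ^ (3 * Suc n)) * q3poch n * iv n = (iv n :: 'a fps)" by simp
  thus ?thesis by (simp add: mult.assoc)
qed

fun qbin :: "nat \<Rightarrow> nat \<Rightarrow> 'a::comm_ring_1 fps" where
  "qbin 0 k = (if k = 0 then 1 else 0)"
| "qbin (Suc m) 0 = 1"
| "qbin (Suc m) (Suc k) = qbin m k + fps_X ^ (3 * Suc k) * qbin m (Suc k)"

lemma qbin_0_right[simp]: "qbin m 0 = 1" by (cases m) auto

lemma qbin_gt: "m < k \<Longrightarrow> qbin m k = 0"
proof (induction m arbitrary: k)
  case 0 then show ?case by simp
next
  case (Suc m) then show ?case by (cases k) auto
qed

lemma qbin_diag[simp]: "qbin m m = 1"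
  by (induction m) (auto simp: qbin_gt)

lemma qbin_poch: "k \<le> m \<Longrightarrow> qbin m k * q3poch k * q3poch (m - k) = (q3poch m :: 'a::comm_ring_1 fps)"
proof (induction m arbitrary: k)
  case 0 then show ?case by simp
next
  case (Suc m)
  show ?case
  proof (cases k)
    case 0 then show ?thesis by simp
  next
    case (Suc k')
    show ?thesis
    proof (cases "k' = m")
      case True
      then show ?thesis using Suc Suc.IH[of m]
        by (simp add: qbin_gt q3poch_Suc mult_ac)
    next
      case False
      hence k'm: "k' < m" using Suc Suc.prems by simp
      have e1: "qbin m k' * q3poch k' * q3poch (m - k') = (q3poch m :: 'a fps)" by (rule Suc.IH) (use k'm in simp)
      have e2: "qbin m (Suc k') * q3poch (Suc k') * q3poch (m - Suc k') = (q3poch m :: 'a fps)"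
        by (rule Suc.IH) (use k'm in simp)
      have mk: "Suc m - Suc k' = Suc (m - Suc k')" "m - k' = Suc (m - Suc k')" using k'm by auto
      have "qbin (Suc m) k * q3poch k * (q3poch (Suc m - k) :: 'a fps)
          = (qbin m k' * q3poch k' * q3poch (m - k')) * (1 - fps_X ^ (3 * Suc k'))
            + fps_X ^ (3 * Suc k') * (qbin m (Suc k') * q3poch (Suc k') * q3poch (m - Suc k'))
              * (1 - fps_X ^ (3 * Suc (m - Suc k')))"
        using Suc mk by (simp add: q3poch_Suc algebra_simps)
      also have "\<dots> = q3poch m * (1 - fps_X ^ (3 * Suc k'))
           + fps_X ^ (3 * Suc k') * q3poch m * (1 - fps_X ^ (3 * Suc (m - Suc k')))"
        by (simp only: e1 e2)
      also have "\<dots> = q3poch m * (1 - fps_X ^ (3 * Suc m))"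
      proof -
        have "fps_X ^ (3 * Suc k') * fps_X ^ (3 * Suc (m - Suc k')) = (fps_X ^ (3 * Suc m) :: 'a fps)"
          using k'm by (simp add: power_add[symmetric])
        have r: "\<And>p a b :: 'a fps. p * (1 - a) + a * p * (1 - b) = p * (1 - a * b)"
          by (simp add: algebra_simps)
        show ?thesis unfolding r by (simp only: \<open>fps_X ^ (3 * Suc k') * fps_X ^ (3 * Suc (m - Suc k')) = fps_X ^ (3 * Suc m)\<close>)
      qed
      finally show ?thesis by (simp add: q3poch_Suc)
    qed
  qed
qed

definition Dp :: "nat \<Rightarrow> nat \<Rightarrow> 'a::comm_ring_1 fps" where
  "Dp l k = (\<Prod>r<k. 1 - fps_X ^ (3 * (l - r)))"

lemma Dp_0[simp]: "Dp l 0 = 1" by (simp add: Dp_def)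
lemma Dp_Suc: "Dp (Suc l) (Suc k) = (1 - fps_X ^ (3 * Suc l)) * Dp l k"
  unfolding Dp_def by (subst prod.lessThan_Suc_shift) simp
lemma Dp_0_Suc[simp]: "Dp 0 (Suc k) = 0"
  unfolding Dp_def by (subst prod.lessThan_Suc_shift) simp
lemma Dp_gt: "l < k \<Longrightarrow> Dp l k = 0"
  unfolding Dp_def by (rule prod_zero) (auto intro!: bexI[of _ l])

lemma Dp_poch: "k \<le> l \<Longrightarrow> Dp l k * q3poch (l - k) = (q3poch l :: 'a::comm_ring_1 fps)"
proof (induction l arbitrary: k)
  case 0 then show ?case by simp
next
  case (Suc l)
  show ?case
  proof (cases k)
    case 0 then show ?thesis by simp
  next
    case (Suc k')
    have "Dp (Suc l) k * q3poch (Suc l - k) = (1 - fps_X ^ (3 * Suc l)) * (Dp l k' * q3poch (l - k') :: 'a fps)"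
      using Suc by (simp add: Dp_Suc mult_ac)
    also have "\<dots> = (1 - fps_X ^ (3 * Suc l)) * q3poch l" using Suc.IH[of k'] Suc.prems Suc by simp
    also have "\<dots> = q3poch (Suc l)" by (simp add: q3poch_Suc mult.commute)
    finally show ?thesis .
  qed
qed

lemma vdm_poly:
  "(\<Sum>k\<le>m. fps_X ^ (3 * ((m - k) * (l - k))) * qbin m k * Dp l k) = (1 :: 'a::comm_ring_1 fps)"
proof (induction m arbitrary: l)
  case 0 then show ?case by simp
next
  case (Suc m)
  define W where "W m l = (\<Sum>k\<le>m. fps_X ^ (3 * ((m - k) * (l - k))) * qbin m k * (Dp l k :: 'a fps))" for m l
  have IH: "W m l' = 1" for l' using Suc.IH by (simp add: W_def)
  define S1 where "S1 = (\<Sum>k\<le>m. fps_X ^ (3 * ((m - k) * (l - Suc k))) * qbin m k * (Dp l (Suc k) :: 'a fps))"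
  define S2 where "S2 = (\<Sum>k\<le>m. fps_X ^ (3 * ((m - k) * (l - Suc k))) * (fps_X ^ (3 * Suc k) * qbin m (Suc k)) * (Dp l (Suc k) :: 'a fps))"
  have split: "W (Suc m) l = fps_X ^ (3 * (Suc m * l)) + S1 + S2"
    unfolding W_def S1_def S2_def
    apply (simp only: sum.atMost_Suc_shift qbin.simps distrib_left distrib_right sum.distrib)
    apply (simp add: mult.assoc)
    done
  have S2: "fps_X ^ (3 * (Suc m * l)) + S2 = fps_X ^ (3 * l) * W m l"
  proof -
    have "W m l = fps_X ^ (3 * (m * l)) + (\<Sum>k<m. fps_X ^ (3 * ((m - Suc k) * (l - Suc k))) * qbin m (Suc k) * (Dp l (Suc k) :: 'a fps))"
      unfolding W_def by (subst sum.atMost_shift) simp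
    moreover have "S2 = (\<Sum>k<m. fps_X ^ (3 * ((m - k) * (l - Suc k))) * (fps_X ^ (3 * Suc k) * qbin m (Suc k)) * (Dp l (Suc k) :: 'a fps))"
      unfolding S2_def lessThan_Suc_atMost[symmetric] sum.lessThan_Suc by (simp add: qbin_gt)
    moreover have "fps_X ^ (3 * ((m - k) * (l - Suc k))) * (fps_X ^ (3 * Suc k) * qbin m (Suc k)) * (Dp l (Suc k) :: 'a fps)
        = fps_X ^ (3 * l) * (fps_X ^ (3 * ((m - Suc k) * (l - Suc k))) * qbin m (Suc k) * Dp l (Suc k))"
      if "k < m" for k
    proof (cases "Suc k \<le> l")
      case True
      define a where "a = m - Suc k"
      define b where "b = l - Suc k"
      have ab: "m = Suc k + a" "l = Suc k + b" using True that by (simp_all add: a_def b_def)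
      have "3 * ((m - k) * (l - Suc k)) + 3 * Suc k = 3 * l + 3 * ((m - Suc k) * (l - Suc k))"
        unfolding ab by (simp add: algebra_simps)
      hence "(fps_X ^ (3 * ((m - k) * (l - Suc k))) * fps_X ^ (3 * Suc k) :: 'a fps)
            = fps_X ^ (3 * l) * fps_X ^ (3 * ((m - Suc k) * (l - Suc k)))"
        by (simp only: power_add[symmetric])
      thus ?thesis by (simp only: mult.assoc[symmetric])
    next
      case False then show ?thesis by (simp add: Dp_gt)
    qed
    ultimately have eq: "S2 = fps_X ^ (3 * l) * (W m l - fps_X ^ (3 * (m * l)))"
      by (simp add: sum_distrib_left)
    have pw: "fps_X ^ (3 * (Suc m * l)) = (fps_X ^ (3 * l) * fps_X ^ (3 * (m * l)) :: 'a fps)"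
      by (simp add: power_add[symmetric])
    have r: "\<And>a b w :: 'a fps. a * b + a * (w - b) = a * w" by (simp add: algebra_simps)
    show ?thesis unfolding pw eq r ..
  qed
  have S1: "S1 = (1 - fps_X ^ (3 * l)) * (if l = 0 then 0 else W m (l - 1))"
  proof (cases l)
    case 0 then show ?thesis by (simp add: S1_def)
  next
    case (Suc l')
    then show ?thesis unfolding S1_def W_def
      by (simp add: Dp_Suc sum_distrib_left mult_ac)
  qed
  have "W (Suc m) l = 1"
    using split S1 S2 IH by (cases "l = 0") (simp_all add: algebra_simps)
  thus ?case by (simp add: W_def)
qed

lemma qbin_iv: "k \<le> m \<Longrightarrow> qbin m k = q3poch m * iv k * (iv (m - k) :: 'a::field fps)"
proof -
  assume km: "k \<le> m"
  have "qbin m k = qbin m k * (q3poch k * iv k) * (q3poch (m - k) * iv (m - k) :: 'a fps)" by simp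
  also have "\<dots> = (qbin m k * q3poch k * q3poch (m - k)) * iv k * iv (m - k)" by (simp add: mult_ac)
  also have "\<dots> = q3poch m * iv k * iv (m - k)" using qbin_poch[where 'a='a, OF km] by simp
  finally show ?thesis .
qed

lemma Dp_iv: "k \<le> l \<Longrightarrow> Dp l k = q3poch l * (iv (l - k) :: 'a::field fps)"
proof -
  assume kl: "k \<le> l"
  have "Dp l k = Dp l k * (q3poch (l - k) * iv (l - k) :: 'a fps)" by simp
  also have "\<dots> = (Dp l k * q3poch (l - k)) * iv (l - k)" by (simp add: mult_ac)
  also have "\<dots> = q3poch l * iv (l - k)" using Dp_poch[where 'a='a, OF kl] by simp
  finally show ?thesis .
qed

lemma vdm_iv:
  "(\<Sum>k\<le>min m l. fps_X ^ (3 * ((m - k) * (l - k))) * iv (m - k) * iv (l - k) * iv k)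
     = iv m * (iv l :: 'a::field fps)"
proof -
  have "(1::'a fps) = (\<Sum>k\<le>m. fps_X ^ (3 * ((m - k) * (l - k))) * qbin m k * Dp l k)"
    using vdm_poly by simp
  also have "\<dots> = (\<Sum>k\<le>min m l. fps_X ^ (3 * ((m - k) * (l - k))) * qbin m k * Dp l k)"
    by (rule sum.mono_neutral_right) (auto simp: Dp_gt)
  also have "\<dots> = (\<Sum>k\<le>min m l. (q3poch m * q3poch l) *
        (fps_X ^ (3 * ((m - k) * (l - k))) * iv (m - k) * iv (l - k) * iv k))"
    by (rule sum.cong) (auto simp: qbin_iv Dp_iv mult_ac)
  also have "\<dots> = (q3poch m * q3poch l) *
      (\<Sum>k\<le>min m l. fps_X ^ (3 * ((m - k) * (l - k))) * iv (m - k) * iv (l - k) * iv k)"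
    by (simp add: sum_distrib_left)
  finally have "iv m * iv l * 1 = iv m * iv l * ((q3poch m * q3poch l) *
      (\<Sum>k\<le>min m l. fps_X ^ (3 * ((m - k) * (l - k))) * iv (m - k) * iv (l - k) * (iv k :: 'a fps)))"
    by simp
  also have "\<dots> = (iv m * q3poch m) * (iv l * q3poch l) *
      (\<Sum>k\<le>min m l. fps_X ^ (3 * ((m - k) * (l - k))) * iv (m - k) * iv (l - k) * iv k)"
    by (simp only: mult_ac)
  finally show ?thesis by simp
qed

fun tri :: "nat \<Rightarrow> nat" where
  "tri 0 = 0" | "tri (Suc n) = tri n + n"

lemma qbinom_thm:
  "(\<Prod>j<M. 1 + y * fps_X ^ (3 * j)) =
     (\<Sum>m\<le>M. y ^ m * fps_X ^ (3 * tri m) * (qbin M m :: 'a::comm_ring_1 fps))"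
proof (induction M arbitrary: y)
  case 0 then show ?case by simp
next
  case (Suc M)
  have "(\<Prod>j<Suc M. 1 + y * fps_X ^ (3 * j)) = (1 + y) * (\<Prod>j<M. 1 + (y * fps_X ^ 3) * fps_X ^ (3 * j))"
    by (subst prod.lessThan_Suc_shift) (simp add: power_add mult_ac)
  also have "\<dots> = (1 + y) * (\<Sum>m\<le>M. (y * fps_X ^ 3) ^ m * fps_X ^ (3 * tri m) * qbin M m)"
    by (simp only: Suc.IH)
  also have "\<dots> = (\<Sum>m\<le>M. y ^ m * fps_X ^ (3 * (m + tri m)) * qbin M m)
                 + (\<Sum>m\<le>M. y ^ Suc m * fps_X ^ (3 * tri (Suc m)) * qbin M m)"
    by (simp add: distrib_right sum_distrib_left power_mult_distrib power_add
        power_mult[symmetric] mult_ac sum.distrib)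
  also have "(\<Sum>m\<le>M. y ^ m * fps_X ^ (3 * (m + tri m)) * qbin M m)
      = 1 + (\<Sum>m\<le>M. y ^ Suc m * fps_X ^ (3 * tri (Suc m)) * (fps_X ^ (3 * Suc m) * qbin M (Suc m)))"
  proof -
    have "(\<Sum>m\<le>M. y ^ m * fps_X ^ (3 * (m + tri m)) * qbin M m)
        = 1 + (\<Sum>m<M. y ^ Suc m * fps_X ^ (3 * (Suc m + tri (Suc m))) * qbin M (Suc m))"
      by (subst sum.atMost_shift) simp
    also have "(\<Sum>m<M. y ^ Suc m * fps_X ^ (3 * (Suc m + tri (Suc m))) * qbin M (Suc m))
       = (\<Sum>m\<le>M. y ^ Suc m * fps_X ^ (3 * tri (Suc m)) * (fps_X ^ (3 * Suc m) * qbin M (Suc m)))"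
      unfolding lessThan_Suc_atMost[symmetric] sum.lessThan_Suc
      by (simp add: qbin_gt power_add mult_ac del: tri.simps)
    finally show ?thesis .
  qed
  also have "1 + (\<Sum>m\<le>M. y ^ Suc m * fps_X ^ (3 * tri (Suc m)) * (fps_X ^ (3 * Suc m) * qbin M (Suc m)))
      + (\<Sum>m\<le>M. y ^ Suc m * fps_X ^ (3 * tri (Suc m)) * qbin M m)
      = 1 + (\<Sum>m\<le>M. y ^ Suc m * fps_X ^ (3 * tri (Suc m)) * qbin (Suc M) (Suc m))"
    by (simp add: sum.distrib[symmetric] algebra_simps del: tri.simps)
  also have "\<dots> = (\<Sum>m\<le>Suc M. y ^ m * fps_X ^ (3 * tri m) * qbin (Suc M) m)"
    by (simp only: sum.atMost_Suc_shift) simp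
  finally show ?case .
qed

lemma eqN_one_minus: "N < d \<Longrightarrow> eqN N (1 - fps_X ^ d) 1"
  using eqN_diff[OF eqN_refl eqN_Xpow[of N d 1]] by simp

lemma eqN_mono_term:
  assumes "N < s * m" "s \<ge> 1"
  shows "eqN N ((fps_const x * fps_X ^ s) ^ m * g) 0"
proof -
  have "(fps_const x * fps_X ^ s) ^ m * g = fps_X ^ (s * m) * (fps_const (x ^ m) * g)"
    by (simp add: power_mult_distrib power_mult[symmetric] fps_const_power mult_ac mult.commute[of s m])
  thus ?thesis using eqN_Xpow[OF assms(1)] by simp
qed

lemma euler_eqN:
  fixes x :: "'a::field"
  assumes s: "s \<ge> 1" and M: "2 * N < M"
  shows "eqN N (\<Prod>j<M. 1 + (fps_const x * fps_X ^ s) * fps_X ^ (3 * j))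
            (\<Sum>m\<le>N. (fps_const x * fps_X ^ s) ^ m * fps_X ^ (3 * tri m) * iv m)"
proof -
  define y where "y = fps_const x * fps_X ^ s"
  have "(\<Prod>j<M. 1 + y * fps_X ^ (3 * j)) = (\<Sum>m\<le>M. y ^ m * fps_X ^ (3 * tri m) * qbin M m)"
    by (rule qbinom_thm)
  also have "\<dots> = (\<Sum>m\<le>N. y ^ m * fps_X ^ (3 * tri m) * qbin M m)
      + (\<Sum>m\<in>{N<..M}. y ^ m * fps_X ^ (3 * tri m) * qbin M m)"
  proof -
    have "{..M} = {..N} \<union> {N<..M}" using M by auto
    thus ?thesis by (simp only:) (rule sum.union_disjoint, auto)
  qed
  finally have e: "(\<Prod>j<M. 1 + y * fps_X ^ (3 * j)) = \<dots>" .
  have "eqN N (\<Sum>m\<in>{N<..M}. y ^ m * fps_X ^ (3 * tri m) * qbin M m) (\<Sum>m\<in>{N<..M}. 0)"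
  proof (rule eqN_sum)
    fix m assume "m \<in> {N<..M}"
    hence "N < s * m" using s by (simp add: less_le_trans[of N m "s*m"])
    thus "eqN N (y ^ m * fps_X ^ (3 * tri m) * qbin M m) 0"
      using eqN_mono_term[of N s m x "fps_X ^ (3 * tri m) * qbin M m"] s
      by (simp add: y_def mult.assoc)
  qed
  hence z: "eqN N (\<Sum>m\<in>{N<..M}. y ^ m * fps_X ^ (3 * tri m) * qbin M m) 0" by simp
  have "eqN N (\<Sum>m\<le>N. y ^ m * fps_X ^ (3 * tri m) * qbin M m)
              (\<Sum>m\<le>N. y ^ m * fps_X ^ (3 * tri m) * iv m)"
  proof (rule eqN_sum)
    fix m assume mN: "m \<in> {..N}"
    hence mM: "m \<le> M" using M by simp
    have "qbin M m = Dp M m * (iv m :: 'a fps)"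
      using qbin_iv[where 'a='a, OF mM] Dp_iv[where 'a='a, OF mM] by (simp add: mult_ac)
    moreover have "eqN N (Dp M m :: 'a fps) 1"
    proof -
      have "eqN N (1 - fps_X ^ (3 * (M - r))) (1::'a fps)" if "r < m" for r
        using that mN M by (intro eqN_one_minus) auto
      thus ?thesis unfolding Dp_def by (intro eqN_prod1) auto
    qed
    ultimately have "eqN N (qbin M m) (iv m :: 'a fps)"
      using eqN_mult[OF _ eqN_refl, of N "Dp M m" 1 "iv m"] by simp
    thus "eqN N (y ^ m * fps_X ^ (3 * tri m) * qbin M m) (y ^ m * fps_X ^ (3 * tri m) * iv m)"
      by (rule eqN_mult[OF eqN_refl])
  qed
  from eqN_add[OF this z] e show ?thesis unfolding y_def by simp
qed

section \<open>The auxiliary sequence C via bivariate series\<close>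

definition sig :: "'a::comm_ring_1 fps fps \<Rightarrow> 'a fps fps" where
  "sig F = Abs_fps (\<lambda>n. fps_X ^ (3 * n) * F $ n)"

lemma sig_mult: "sig (F * G) = sig F * sig G"
proof (rule fps_ext)
  fix n
  have "sig (F * G) $ n = (\<Sum>i=0..n. fps_X ^ (3 * n) * (F $ i * G $ (n - i)))"
    by (simp add: sig_def fps_mult_nth sum_distrib_left)
  also have "\<dots> = (\<Sum>i=0..n. (fps_X ^ (3 * i) * F $ i) * (fps_X ^ (3 * (n - i)) * G $ (n - i)))"
  proof (rule sum.cong)
    fix i assume "i \<in> {0..n}"
    hence "fps_X ^ (3 * n) = (fps_X ^ (3 * i) * fps_X ^ (3 * (n - i)) :: 'a fps)"
      by (simp add: power_add[symmetric])
    thus "fps_X ^ (3 * n) * (F $ i * G $ (n - i)) = (fps_X ^ (3 * i) * F $ i) * (fps_X ^ (3 * (n - i)) * G $ (n - i))"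
      by (simp only: mult_ac)
  qed simp
  also have "\<dots> = (sig F * sig G) $ n" by (simp add: sig_def fps_mult_nth)
  finally show "sig (F * G) $ n = (sig F * sig G) $ n" .
qed

lemma sig_add: "sig (F + G) = sig F + sig G"
  by (rule fps_ext) (simp add: sig_def algebra_simps)

lemma sig_nth[simp]: "sig F $ n = fps_X ^ (3 * n) * F $ n"
  by (simp add: sig_def)

context
  fixes u v :: "'a::field"
begin

definition ca :: "nat \<Rightarrow> 'a fps" where "ca n = fps_const (u ^ n) * iv n"
definition cb :: "nat \<Rightarrow> 'a fps" where "cb n = fps_const (v ^ n) * fps_X ^ n * iv n"
definition ce :: "nat \<Rightarrow> 'a fps" where
  "ce n = fps_const ((u * v) ^ n) * fps_X ^ (2 * n + 3 * tri n) * iv n"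

definition AA :: "'a fps fps" where "AA = Abs_fps ca"
definition BB :: "'a fps fps" where "BB = Abs_fps cb"
definition EE :: "'a fps fps" where "EE = Abs_fps ce"
definition CC :: "'a fps fps" where "CC = AA * BB * EE"

lemma AA_eq: "AA * (1 - fps_const (fps_const u) * fps_X) = sig AA"
proof (rule fps_ext)
  fix n show "(AA * (1 - fps_const (fps_const u) * fps_X)) $ n = sig AA $ n"
  proof (cases n)
    case 0 then show ?thesis by (simp add: AA_def ca_def algebra_simps)
  next
    case (Suc k)
    have "(AA * (1 - fps_const (fps_const u) * fps_X)) $ n = ca (Suc k) - fps_const u * ca k"
      using Suc by (simp add: AA_def algebra_simps)
    also have "ca k = fps_const (u ^ k) * (iv (Suc k) * (1 - fps_X ^ (3 * Suc k)))"
      by (simp only: ca_def iv_Suc)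
    also have "ca (Suc k) - fps_const u * (fps_const (u ^ k) * (iv (Suc k) * (1 - fps_X ^ (3 * Suc k))))
       = fps_X ^ (3 * n) * ca n" using Suc by (simp add: ca_def algebra_simps fps_const_mult[symmetric] del: fps_const_mult)
    finally show ?thesis by (simp add: AA_def)
  qed
qed

lemma BB_eq: "BB * (1 - fps_const (fps_const v * fps_X) * fps_X) = sig BB"
proof (rule fps_ext)
  fix n show "(BB * (1 - fps_const (fps_const v * fps_X) * fps_X)) $ n = sig BB $ n"
  proof (cases n)
    case 0 then show ?thesis by (simp add: BB_def cb_def algebra_simps)
  next
    case (Suc k)
    have "(BB * (1 - fps_const (fps_const v * fps_X) * fps_X)) $ n = cb (Suc k) - (fps_const v * fps_X) * cb k"
      using Suc by (simp add: BB_def algebra_simps)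
    also have "cb k = fps_const (v ^ k) * fps_X ^ k * (iv (Suc k) * (1 - fps_X ^ (3 * Suc k)))"
      by (simp only: cb_def iv_Suc)
    also have "cb (Suc k) - (fps_const v * fps_X) * (fps_const (v ^ k) * fps_X ^ k * (iv (Suc k) * (1 - fps_X ^ (3 * Suc k))))
       = fps_X ^ (3 * n) * cb n" using Suc by (simp add: cb_def algebra_simps)
    finally show ?thesis by (simp add: BB_def)
  qed
qed

lemma EE_eq: "EE = (1 + fps_const (fps_const (u * v) * fps_X ^ 2) * fps_X) * sig EE"
proof (rule fps_ext)
  fix n show "EE $ n = ((1 + fps_const (fps_const (u * v) * fps_X ^ 2) * fps_X) * sig EE) $ n"
  proof (cases n)
    case 0 then show ?thesis by (simp add: EE_def ce_def)
  next
    case (Suc k)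
    have "((1 + fps_const (fps_const (u * v) * fps_X ^ 2) * fps_X) * sig EE) $ n
        = fps_X ^ (3 * Suc k) * ce (Suc k) + fps_const (u * v) * fps_X ^ 2 * (fps_X ^ (3 * k) * ce k)"
      using Suc by (simp add: EE_def algebra_simps)
    also have "fps_const (u * v) * fps_X ^ 2 * (fps_X ^ (3 * k) * ce k)
        = fps_const ((u * v) ^ Suc k) * fps_X ^ (2 * Suc k + 3 * tri (Suc k)) * iv k"
    proof -
      have "fps_X ^ 2 * (fps_X ^ (3 * k) * fps_X ^ (2 * k + 3 * tri k)) = (fps_X ^ (2 * Suc k + 3 * tri (Suc k)) :: 'a fps)"
        by (simp add: power_add[symmetric] algebra_simps)
      thus ?thesis by (simp add: ce_def mult_ac)
    qed
    also have "\<dots> = ce (Suc k) * (1 - fps_X ^ (3 * Suc k))"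
    proof -
      have "ce (Suc k) * (1 - fps_X ^ (3 * Suc k)) = fps_const ((u * v) ^ Suc k) * fps_X ^ (2 * Suc k + 3 * tri (Suc k))
          * (iv (Suc k) * (1 - fps_X ^ (3 * Suc k)))"
        by (simp only: ce_def mult.assoc)
      thus ?thesis by (simp only: iv_Suc)
    qed
    finally show ?thesis using Suc by (simp add: EE_def algebra_simps)
  qed
qed

lemma CC_eq:
  "CC * (1 - fps_const (fps_const u) * fps_X) * (1 - fps_const (fps_const v * fps_X) * fps_X)
    = (1 + fps_const (fps_const (u * v) * fps_X ^ 2) * fps_X) * sig CC"
proof -
  have "CC * (1 - fps_const (fps_const u) * fps_X) * (1 - fps_const (fps_const v * fps_X) * fps_X)
      = (AA * (1 - fps_const (fps_const u) * fps_X)) * (BB * (1 - fps_const (fps_const v * fps_X) * fps_X)) * EE"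
    by (simp add: CC_def mult_ac)
  also have "\<dots> = sig AA * sig BB * ((1 + fps_const (fps_const (u * v) * fps_X ^ 2) * fps_X) * sig EE)"
    by (simp only: AA_eq BB_eq EE_eq[symmetric])
  also have "\<dots> = (1 + fps_const (fps_const (u * v) * fps_X ^ 2) * fps_X) * sig CC"
    by (simp add: CC_def sig_mult mult_ac)
  finally show ?thesis .
qed

end

lemma nth_two_factors:
  fixes F :: "'b::comm_ring_1 fps"
  shows "(F * (1 - fps_const a * fps_X) * (1 - fps_const b * fps_X)) $ Suc (Suc n)
     = F $ Suc (Suc n) - (a + b) * F $ Suc n + a * b * F $ n"
    and "(F * (1 - fps_const a * fps_X) * (1 - fps_const b * fps_X)) $ Suc 0
     = F $ Suc 0 - (a + b) * F $ 0"
    and "(F * (1 - fps_const a * fps_X) * (1 - fps_const b * fps_X)) $ 0 = F $ 0"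
proof -
  have e: "F * (1 - fps_const a * fps_X) * (1 - fps_const b * fps_X)
      = F - fps_const (a + b) * (fps_X * F) + fps_const (a * b) * (fps_X * (fps_X * F))"
    by (simp add: algebra_simps fps_const_add[symmetric] fps_const_mult[symmetric] del: fps_const_add fps_const_mult)
  show "(F * (1 - fps_const a * fps_X) * (1 - fps_const b * fps_X)) $ Suc (Suc n)
     = F $ Suc (Suc n) - (a + b) * F $ Suc n + a * b * F $ n"
    unfolding e by simp
  show "(F * (1 - fps_const a * fps_X) * (1 - fps_const b * fps_X)) $ Suc 0
     = F $ Suc 0 - (a + b) * F $ 0"
    unfolding e by simp
  show "(F * (1 - fps_const a * fps_X) * (1 - fps_const b * fps_X)) $ 0 = F $ 0"
    unfolding e by simp
qed

lemma nth_one_factor: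
  fixes G :: "'b::comm_ring_1 fps"
  shows "((1 + fps_const c * fps_X) * G) $ Suc m = G $ Suc m + c * G $ m"
    and "((1 + fps_const c * fps_X) * G) $ 0 = G $ 0"
  by (simp_all add: algebra_simps)

context
  fixes u v :: "'a::field"
begin

lemma CC_0: "CC u v $ 0 = 1"
  by (simp add: CC_def AA_def BB_def EE_def ca_def cb_def ce_def)

lemma CC_1: "CC u v $ 1 * (1 - fps_X ^ 3) = fps_const u + fps_const v * fps_X + fps_const (u * v) * fps_X ^ 2"
proof -
  have "(CC u v * (1 - fps_const (fps_const u) * fps_X) * (1 - fps_const (fps_const v * fps_X) * fps_X)) $ Suc 0
       = ((1 + fps_const (fps_const (u * v) * fps_X ^ 2) * fps_X) * sig (CC u v)) $ Suc 0"
    by (simp only: CC_eq)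
  hence "CC u v $ 1 - (fps_const u + fps_const v * fps_X) * CC u v $ 0
      = fps_X ^ 3 * CC u v $ 1 + fps_const (u * v) * fps_X ^ 2 * CC u v $ 0"
    by (simp only: nth_two_factors nth_one_factor sig_nth) simp
  thus ?thesis by (simp add: CC_0 algebra_simps)
qed

lemma CC_rec:
  "CC u v $ Suc (Suc n) * (1 - fps_X ^ (3 * Suc (Suc n)))
    = (fps_const u + fps_const v * fps_X + fps_const (u * v) * fps_X ^ 2 * fps_X ^ (3 * Suc n)) * CC u v $ Suc n
      - fps_const (u * v) * fps_X * CC u v $ n"
proof -
  have "(CC u v * (1 - fps_const (fps_const u) * fps_X) * (1 - fps_const (fps_const v * fps_X) * fps_X)) $ Suc (Suc n)
       = ((1 + fps_const (fps_const (u * v) * fps_X ^ 2) * fps_X) * sig (CC u v)) $ Suc (Suc n)"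
    by (simp only: CC_eq)
  hence "CC u v $ Suc (Suc n) - (fps_const u + fps_const v * fps_X) * CC u v $ Suc n
         + fps_const u * (fps_const v * fps_X) * CC u v $ n
      = fps_X ^ (3 * Suc (Suc n)) * CC u v $ Suc (Suc n)
        + (fps_const (u * v) * fps_X ^ 2) * (fps_X ^ (3 * Suc n) * CC u v $ Suc n)"
    by (simp only: nth_two_factors nth_one_factor sig_nth)
  thus ?thesis by (simp add: algebra_simps)
qed

end

section \<open>Base partitions\<close>

definition okstep :: "nat \<Rightarrow> nat \<Rightarrow> bool" where
  "okstep x y \<longleftrightarrow> (\<not> 3 dvd y \<longrightarrow> 3 \<le> y - x \<and> y - x \<le> 5) \<and> (3 dvd y \<longrightarrow> 4 \<le> y - x \<and> y - x \<le> 6)"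

lemma okstep_less: "okstep x y \<Longrightarrow> x < y"
  unfolding okstep_def by presburger

lemma in_BS_iff: "in_BS \<beta> \<longleftrightarrow> (\<beta> \<noteq> [] \<longrightarrow> hd \<beta> \<in> {1,2,3}) \<and> successively okstep \<beta>"
proof
  assume h: "in_BS \<beta>"
  have "successively okstep \<beta>"
    unfolding successively_conv_nth
  proof (intro allI impI)
    fix i assume "Suc i < length \<beta>"
    with h show "okstep (\<beta> ! i) (\<beta> ! Suc i)"
      unfolding in_BS_def okstep_def by (metis One_nat_def Suc_le_mono diff_Suc_1 le0)
  qed
  moreover have "\<beta> \<noteq> [] \<longrightarrow> hd \<beta> \<in> {1,2,3}" using h unfolding in_BS_def by (simp add: hd_conv_nth)
  ultimately show "(\<beta> \<noteq> [] \<longrightarrow> hd \<beta> \<in> {1,2,3}) \<and> successively okstep \<beta>" by simp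
next
  assume h: "(\<beta> \<noteq> [] \<longrightarrow> hd \<beta> \<in> {1,2,3}) \<and> successively okstep \<beta>"
  have sw: "sorted_wrt (<) \<beta>"
  proof -
    have "successively (<) \<beta>" using h successively_mono okstep_less by blast
    thus ?thesis by (subst successively_conv_sorted_wrt[symmetric]) (auto simp: transp_def)
  qed
  hence so: "sorted \<beta>" by (rule strict_sorted_imp_sorted)
  have pos: "\<forall>x\<in>set \<beta>. 0 < x"
  proof (cases \<beta>)
    case (Cons a l)
    hence "a \<ge> 1" using h by auto
    moreover have "\<forall>x\<in>set l. a < x" using sw Cons by simp
    ultimately show ?thesis using Cons by auto
  qed simp
  have "\<forall>i. 1 \<le> i \<and> i < length \<beta> \<longrightarrow> okstep (\<beta> ! (i - 1)) (\<beta> ! i)"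
  proof (intro allI impI)
    fix i assume "1 \<le> i \<and> i < length \<beta>"
    then obtain j where "i = Suc j" "Suc j < length \<beta>" by (cases i) auto
    thus "okstep (\<beta> ! (i - 1)) (\<beta> ! i)" using h successively_nth by fastforce
  qed
  thus "in_BS \<beta>" unfolding in_BS_def okstep_def using so pos h by (auto simp: hd_conv_nth)
qed

definition Dd :: "nat \<Rightarrow> nat \<Rightarrow> nat" where
  "Dd r s = (if s < r \<or> (r = 3 \<and> s = 3) then 6 else 3)"

lemma Dd_dvd: "3 dvd Dd r s" by (simp add: Dd_def)
lemma Dd_pos: "Dd r s \<ge> 3" by (simp add: Dd_def)

lemma okstep_shift: "3 dvd d \<Longrightarrow> okstep (x + d) (y + d) = okstep x y"
  unfolding okstep_def by presburger

lemma okstep_first: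
  assumes "r \<in> {1,2,3}"
  shows "okstep r y \<longleftrightarrow> (\<exists>s\<in>{1,2,3}. y = s + Dd r s)"
  using assms unfolding okstep_def Dd_def by (elim insertE; simp; presburger)

lemma succ_shift: "3 dvd d \<Longrightarrow> successively okstep (map (\<lambda>z. z + d) xs) \<longleftrightarrow> successively okstep xs"
  by (simp add: successively_map okstep_shift)

lemma Dd_inj: "r \<in> {1,2,3} \<Longrightarrow> s \<in> {1,2,3} \<Longrightarrow> s' \<in> {1,2,3} \<Longrightarrow> s + Dd r s = s' + Dd r s' \<Longrightarrow> s = s'"
  unfolding Dd_def by auto

lemma BS_cons_char:
  assumes r: "r \<in> {1,2,3}"
  shows "(in_BS \<beta> \<and> length \<beta> = Suc (Suc m) \<and> hd \<beta> = r) \<longleftrightarrow>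
    (\<exists>s\<in>{1,2,3}. \<exists>xs. in_BS xs \<and> length xs = Suc m \<and> hd xs = s \<and> \<beta> = r # map (\<lambda>z. z + Dd r s) xs)"
proof
  assume "\<exists>s\<in>{1,2,3}. \<exists>xs. in_BS xs \<and> length xs = Suc m \<and> hd xs = s \<and> \<beta> = r # map (\<lambda>z. z + Dd r s) xs"
  then obtain s xs where s: "s \<in> {1,2,3}" and xs: "in_BS xs" "length xs = Suc m" "hd xs = s"
     and b: "\<beta> = r # map (\<lambda>z. z + Dd r s) xs" by blast
  obtain ys where ys: "xs = s # ys" using xs by (cases xs) auto
  have "okstep r (s + Dd r s)" using okstep_first[OF r] s by blast
  moreover have "successively okstep (map (\<lambda>z. z + Dd r s) xs)"
    using xs(1) by (simp add: in_BS_iff succ_shift Dd_dvd)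
  ultimately have "successively okstep \<beta>" unfolding b ys by simp
  thus "in_BS \<beta> \<and> length \<beta> = Suc (Suc m) \<and> hd \<beta> = r" using xs r by (simp add: in_BS_iff b)
next
  assume h: "in_BS \<beta> \<and> length \<beta> = Suc (Suc m) \<and> hd \<beta> = r"
  then obtain y ys where b: "\<beta> = r # y # ys" by (cases \<beta>; cases "tl \<beta>") auto
  have succ: "successively okstep (r # y # ys)" using h b by (simp add: in_BS_iff)
  hence "okstep r y" by simp
  then obtain s where s: "s \<in> {1,2,3}" and y: "y = s + Dd r s" using okstep_first[OF r] by blast
  define d where "d = Dd r s"
  have sw: "sorted_wrt (<) (y # ys)"
  proof -
    have "successively okstep (y # ys)" using succ by simp
    hence "successively (<) (y # ys)" by (rule successively_mono) (simp add: okstep_less)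
    thus ?thesis by (subst successively_conv_sorted_wrt[symmetric]) (auto simp: transp_def)
  qed
  have ge: "\<forall>z\<in>set (y # ys). d \<le> z" using sw y by (auto simp: d_def)
  define xs where "xs = map (\<lambda>z. z - d) (y # ys)"
  have bk: "map (\<lambda>z. z + d) xs = y # ys"
    unfolding xs_def map_map comp_def using ge by (intro map_idI) auto
  have "successively okstep (map (\<lambda>z. z + d) xs)" using bk succ by simp
  hence "successively okstep xs" by (simp add: succ_shift d_def Dd_dvd)
  moreover have "hd xs = s" by (simp add: xs_def y d_def)
  ultimately have "in_BS xs" using s by (simp add: in_BS_iff)
  moreover have "length xs = Suc m" using h b by (simp add: xs_def)
  moreover have "\<beta> = r # map (\<lambda>z. z + Dd r s) xs" using bk b by (simp add: d_def)
  ultimately show "\<exists>s\<in>{1,2,3}. \<exists>xs. in_BS xs \<and> length xs = Suc m \<and> hd xs = s \<and> \<beta> = r # map (\<lambda>z. z + Dd r s) xs"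
    using s \<open>hd xs = s\<close> by blast
qed

lemma finite_BS: "finite {\<beta>. in_BS \<beta> \<and> length \<beta> = n \<and> sum_list \<beta> = N \<and> P \<beta>}"
proof (rule finite_subset)
  show "{\<beta>. in_BS \<beta> \<and> length \<beta> = n \<and> sum_list \<beta> = N \<and> P \<beta>} \<subseteq> {xs. set xs \<subseteq> {..N} \<and> length xs = n}"
    by (auto dest: member_le_sum_list)
  show "finite {xs. set xs \<subseteq> {..N} \<and> length xs = n}" by (rule finite_lists_length_eq) simp
qed

lemma sum_list_shift: "sum_list (map (\<lambda>z. z + d) xs) = sum_list xs + d * length xs"
  by (induction xs) auto

lemma cnt_shift:
  assumes "3 dvd d"
  shows "cnt_a (map (\<lambda>z. z + d) xs) = cnt_a xs" "cnt_c (map (\<lambda>z. z + d) xs) = cnt_c xs"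
proof -
  have m: "(z + d) mod 3 = z mod 3" for z using assms by presburger
  show "cnt_a (map (\<lambda>z. z + d) xs) = cnt_a xs" unfolding cnt_a_def by (induction xs) (auto simp: m)
  show "cnt_c (map (\<lambda>z. z + d) xs) = cnt_c xs" unfolding cnt_c_def by (induction xs) (auto simp: m)
qed

context
  fixes u v :: "'a::field"
begin

definition wt :: "nat list \<Rightarrow> 'a" where "wt \<beta> = u ^ cnt_a \<beta> * v ^ cnt_c \<beta>"
definition cr :: "nat \<Rightarrow> 'a" where "cr r = (if r = 1 then u else if r = 2 then v else u * v)"

lemma wt_cons: "r \<in> {1,2,3} \<Longrightarrow> wt (r # xs) = cr r * wt xs"
  unfolding wt_def cr_def cnt_a_def cnt_c_def by auto

lemma wt_shift: "3 dvd d \<Longrightarrow> wt (map (\<lambda>z. z + d) xs) = wt xs"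
  by (simp add: wt_def cnt_shift)

definition bR :: "nat \<Rightarrow> nat \<Rightarrow> 'a fps" where
  "bR r n = Abs_fps (\<lambda>N. \<Sum>\<beta>\<in>{\<beta>. in_BS \<beta> \<and> length \<beta> = n \<and> sum_list \<beta> = N \<and> hd \<beta> = r}. wt \<beta>)"

lemma bS_0: "bS u v 0 = 1"
proof (rule fps_ext)
  fix N
  have "{\<beta>. in_BS \<beta> \<and> length \<beta> = 0 \<and> sum_list \<beta> = N} = (if N = 0 then {[]} else {})"
    by (auto simp: in_BS_def)
  thus "bS u v 0 $ N = 1 $ N" by (simp add: bS_def wt_def cnt_a_def cnt_c_def)
qed

lemma bR_1: "r \<in> {1,2,3} \<Longrightarrow> bR r 1 = fps_const (cr r) * fps_X ^ r"
proof (rule fps_ext)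
  fix N assume r: "r \<in> {1,2,3}"
  have "{\<beta>. in_BS \<beta> \<and> length \<beta> = 1 \<and> sum_list \<beta> = N \<and> hd \<beta> = r} = (if N = r then {[r]} else {})"
    using r by (auto simp: in_BS_iff length_Suc_conv)
  thus "bR r 1 $ N = (fps_const (cr r) * fps_X ^ r) $ N"
    using r by (simp add: bR_def wt_cons[of r "[]"] fps_X_power_mult_right_nth)
      (simp add: wt_def cnt_a_def cnt_c_def)
qed

lemma bS_split: "bS u v (Suc m) = bR 1 (Suc m) + bR 2 (Suc m) + bR 3 (Suc m)"
proof (rule fps_ext)
  fix N
  define S where "S r = {\<beta>. in_BS \<beta> \<and> length \<beta> = Suc m \<and> sum_list \<beta> = N \<and> hd \<beta> = r}" for r
  have fin: "finite (S r)" for r unfolding S_def by (rule finite_BS)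
  have "{\<beta>. in_BS \<beta> \<and> length \<beta> = Suc m \<and> sum_list \<beta> = N} = S 1 \<union> (S 2 \<union> S 3)"
    unfolding S_def by (auto simp: in_BS_iff)
  moreover have "S 1 \<inter> (S 2 \<union> S 3) = {}" "S 2 \<inter> S 3 = {}" unfolding S_def by auto
  ultimately have "(\<Sum>\<beta>\<in>{\<beta>. in_BS \<beta> \<and> length \<beta> = Suc m \<and> sum_list \<beta> = N}. wt \<beta>)
     = sum wt (S 1) + (sum wt (S 2) + sum wt (S 3))"
    using fin by (simp add: sum.union_disjoint)
  thus "bS u v (Suc m) $ N = (bR 1 (Suc m) + bR 2 (Suc m) + bR 3 (Suc m)) $ N"
    by (simp add: bS_def bR_def S_def wt_def add.assoc)
qed

lemma bR_rec:
  assumes r: "r \<in> {1,2,3}"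
  shows "bR r (Suc (Suc m)) = fps_const (cr r) * fps_X ^ r *
          (\<Sum>s\<in>{1,2,3}. fps_X ^ (Dd r s * Suc m) * bR s (Suc m))"
proof (rule fps_ext)
  fix N
  define g where "g s xs = r # map (\<lambda>z. z + Dd r s) xs" for s xs
  define U where "U s = {xs. in_BS xs \<and> length xs = Suc m \<and> sum_list xs = N - (r + Dd r s * Suc m) \<and> hd xs = s
      \<and> r + Dd r s * Suc m \<le> N}" for s
  define T where "T = {\<beta>. in_BS \<beta> \<and> length \<beta> = Suc (Suc m) \<and> sum_list \<beta> = N \<and> hd \<beta> = r}"
  have sumg: "sum_list (g s xs) = r + sum_list xs + Dd r s * Suc m" if "length xs = Suc m" for s xs
    using that by (simp add: g_def sum_list_shift)
  have T: "T = (\<Union>s\<in>{1,2,3}. g s ` U s)"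
  proof
    show "T \<subseteq> (\<Union>s\<in>{1,2,3}. g s ` U s)"
    proof
      fix \<beta> assume "\<beta> \<in> T"
      hence b: "in_BS \<beta> \<and> length \<beta> = Suc (Suc m) \<and> hd \<beta> = r" "sum_list \<beta> = N" by (auto simp: T_def)
      then obtain s xs where s: "s \<in> {1,2,3}" "in_BS xs" "length xs = Suc m" "hd xs = s" "\<beta> = g s xs"
        using BS_cons_char[OF r] unfolding g_def by blast
      hence "xs \<in> U s" using b sumg[of xs s] by (auto simp: U_def)
      thus "\<beta> \<in> (\<Union>s\<in>{1,2,3}. g s ` U s)" using s by blast
    qed
    show "(\<Union>s\<in>{1,2,3}. g s ` U s) \<subseteq> T"
    proof
      fix \<beta> assume "\<beta> \<in> (\<Union>s\<in>{1,2,3}. g s ` U s)"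
      then obtain s xs where s: "s \<in> {1,2,3}" "xs \<in> U s" "\<beta> = g s xs" by blast
      hence "in_BS \<beta> \<and> length \<beta> = Suc (Suc m) \<and> hd \<beta> = r"
        using BS_cons_char[OF r, of \<beta> m] unfolding g_def U_def by blast
      moreover have "sum_list \<beta> = N" using s sumg[of xs s] by (auto simp: U_def)
      ultimately show "\<beta> \<in> T" by (simp add: T_def)
    qed
  qed
  have finU: "finite (U s)" for s
    by (rule finite_subset[OF _ finite_BS[of "Suc m" "N - (r + Dd r s * Suc m)" "\<lambda>_. True"]]) (auto simp: U_def)
  have inj: "inj_on (g s) A" for s :: nat and A :: "nat list set"
    by (rule inj_onI) (auto simp: g_def dest: inj_mapD[rotated] intro: injI)
  have disj: "g s ` U s \<inter> g s' ` U s' = {}" if "s \<in> {1,2,3}" "s' \<in> {1,2,3}" "s \<noteq> s'" for s s'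
  proof (rule ccontr)
    assume "g s ` U s \<inter> g s' ` U s' \<noteq> {}"
    then obtain xs xs' where x: "xs \<in> U s" "xs' \<in> U s'" "g s xs = g s' xs'" by blast
    obtain ys where ys: "xs = s # ys" using x(1) by (cases xs) (auto simp: U_def)
    obtain ys' where ys': "xs' = s' # ys'" using x(2) by (cases xs') (auto simp: U_def)
    have "s + Dd r s = s' + Dd r s'" using x(3) by (simp add: g_def ys ys')
    thus False using Dd_inj[OF r that(1,2)] that(3) by blast
  qed
  have "bR r (Suc (Suc m)) $ N = sum wt T" by (simp add: bR_def T_def)
  also have "\<dots> = (\<Sum>s\<in>{1,2,3}. sum wt (g s ` U s))"
    unfolding T by (rule sum.UNION_disjoint) (use finU disj in \<open>auto simp: pairwise_def\<close>)
  also have "\<dots> = (\<Sum>s\<in>{1,2,3}. cr r * sum wt (U s))"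
  proof (rule sum.cong)
    fix s :: nat assume s: "s \<in> {1,2,3}"
    have "sum wt (g s ` U s) = sum (wt \<circ> g s) (U s)" by (rule sum.reindex[OF inj])
    also have "\<dots> = sum (\<lambda>xs. cr r * wt xs) (U s)"
      by (rule sum.cong) (simp_all add: g_def wt_cons[OF r] wt_shift[OF Dd_dvd])
    finally show "sum wt (g s ` U s) = cr r * sum wt (U s)" by (simp add: sum_distrib_left)
  qed simp
  also have "\<dots> = (\<Sum>s\<in>{1,2,3}. cr r * (if N < r + Dd r s * Suc m then 0
                     else bR s (Suc m) $ (N - (r + Dd r s * Suc m))))"
  proof (rule sum.cong)
    fix s :: nat assume s: "s \<in> {1,2,3}"
    show "cr r * sum wt (U s) = cr r * (if N < r + Dd r s * Suc m then 0
                     else bR s (Suc m) $ (N - (r + Dd r s * Suc m)))"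
    proof (cases "N < r + Dd r s * Suc m")
      case True then show ?thesis by (simp add: U_def)
    next
      case False
      hence "U s = {xs. in_BS xs \<and> length xs = Suc m \<and> sum_list xs = N - (r + Dd r s * Suc m) \<and> hd xs = s}"
        by (auto simp: U_def)
      thus ?thesis using False by (simp add: bR_def)
    qed
  qed simp
  also have "\<dots> = (fps_const (cr r) * fps_X ^ r *
          (\<Sum>s\<in>{1,2,3}. fps_X ^ (Dd r s * Suc m) * bR s (Suc m))) $ N"
  proof -
    have "fps_const (cr r) * fps_X ^ r * (\<Sum>s\<in>{1,2,3}. fps_X ^ (Dd r s * Suc m) * bR s (Suc m))
      = (\<Sum>s\<in>{1,2,3}. fps_const (cr r) * (fps_X ^ (r + Dd r s * Suc m) * bR s (Suc m)))"
      by (simp add: sum_distrib_left power_add algebra_simps)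
    thus ?thesis by (simp only: fps_sum_nth fps_mult_left_const_nth fps_X_power_mult_nth)
  qed
  finally show "bR r (Suc (Suc m)) $ N = (fps_const (cr r) * fps_X ^ r *
          (\<Sum>s\<in>{1,2,3}. fps_X ^ (Dd r s * Suc m) * bR s (Suc m))) $ N" .
qed

lemma cr_simps[simp]: "cr 1 = u" "cr (Suc 0) = u" "cr 2 = v" "cr 3 = u * v" by (simp_all add: cr_def)
lemma Dd_simps[simp]: "Dd 1 1 = 3" "Dd 1 2 = 3" "Dd 1 3 = 3" "Dd 2 1 = 6" "Dd 2 2 = 3" "Dd 2 3 = 3"
  "Dd 3 1 = 6" "Dd 3 2 = 6" "Dd 3 3 = 6"
  "Dd (Suc 0) (Suc 0) = 3" "Dd (Suc 0) 2 = 3" "Dd (Suc 0) 3 = 3" "Dd 2 (Suc 0) = 6" "Dd 3 (Suc 0) = 6"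
  by (simp_all add: Dd_def)
lemma bR_1': "r \<in> {1,2,3} \<Longrightarrow> bR r (Suc 0) = fps_const (cr r) * fps_X ^ r"
  using bR_1 by simp

lemma bR1_gen: "bR 1 (Suc m) = fps_const u * fps_X * fps_X ^ (3 * m) * bS u v m"
proof (cases m)
  case 0 then show ?thesis by (simp add: bR_1' bS_0)
next
  case (Suc k)
  have "bR 1 (Suc m) = fps_const u * fps_X * (fps_X ^ (3 * Suc k) * (bR 1 (Suc k) + bR 2 (Suc k) + bR 3 (Suc k)))"
    using Suc by (simp add: bR_rec algebra_simps mult.commute[of 3])
  also have "\<dots> = fps_const u * fps_X * fps_X ^ (3 * m) * bS u v m"
    using Suc by (simp add: bS_split mult_ac)
  finally show ?thesis .
qed

lemma bR3_gen: "bR 3 (Suc m) = fps_const (u * v) * fps_X ^ 3 * fps_X ^ (6 * m) * bS u v m"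
proof (cases m)
  case 0 then show ?thesis by (simp add: bR_1' bS_0)
next
  case (Suc k)
  have "bR 3 (Suc m) = fps_const (u * v) * fps_X ^ 3 * (fps_X ^ (6 * Suc k) * (bR 1 (Suc k) + bR 2 (Suc k) + bR 3 (Suc k)))"
    using Suc by (simp add: bR_rec algebra_simps mult.commute[of 6])
  also have "\<dots> = fps_const (u * v) * fps_X ^ 3 * fps_X ^ (6 * m) * bS u v m"
    using Suc by (simp add: bS_split mult_ac)
  finally show ?thesis .
qed

lemma bR2_rec: "bR 2 (Suc (Suc m)) = fps_const v * fps_X ^ 2 *
    (fps_X ^ (6 * Suc m) * bR 1 (Suc m) + fps_X ^ (3 * Suc m) * (bS u v (Suc m) - bR 1 (Suc m)))"
  by (simp add: bR_rec bS_split algebra_simps mult.commute[of 3] mult.commute[of 6])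

lemma bS_1: "bS u v 1 = fps_const u * fps_X + fps_const v * fps_X ^ 2 + fps_const (u * v) * fps_X ^ 3"
  using bS_split[of 0] by (simp add: bR_1')

end

lemma alg_step:
  fixes x z p l c0 c1 c2 a b s0 s1 :: "'a::comm_ring_1"
  assumes s0: "s0 = p * l * c0"
    and s1: "s1 = p * (1 - x ^ 3 * z) * (x * z * l) * c1"
    and rec: "c2 * (1 - x ^ 6 * z) = (a + b * x + a * b * x ^ 2 * (x ^ 3 * z)) * c1 - a * b * x * c0"
  shows "a * x * (x ^ 3 * z) * s1 + b * x ^ 2 * (x ^ 6 * z ^ 2 * (a * x * z * s0) + x ^ 3 * z * (s1 - a * x * z * s0))
          + a * b * x ^ 3 * (x ^ 6 * z ^ 2) * s1
        = p * (1 - x ^ 3 * z) * (1 - x ^ 6 * z) * (x ^ 5 * z ^ 2 * l) * c2"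
proof -
  have "p * (1 - x ^ 3 * z) * (1 - x ^ 6 * z) * (x ^ 5 * z ^ 2 * l) * c2
      = p * (1 - x ^ 3 * z) * (x ^ 5 * z ^ 2 * l) * (c2 * (1 - x ^ 6 * z))" by (simp add: mult_ac)
  also have "\<dots> = p * (1 - x ^ 3 * z) * (x ^ 5 * z ^ 2 * l) * ((a + b * x + a * b * x ^ 2 * (x ^ 3 * z)) * c1 - a * b * x * c0)"
    by (simp only: rec)
  also have "\<dots> = a * x * (x ^ 3 * z) * s1 + b * x ^ 2 * (x ^ 6 * z ^ 2 * (a * x * z * s0) + x ^ 3 * z * (s1 - a * x * z * s0))
          + a * b * x ^ 3 * (x ^ 6 * z ^ 2) * s1"
    unfolding s0 s1 by (simp add: algebra_simps eval_nat_numeral)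
  finally show ?thesis by simp
qed

context
  fixes u v :: "'a::field"
begin

lemma bS_closed_aux:
  "bS u v m = q3poch m * fps_X ^ (m + 3 * tri m) * CC u v $ m \<and>
   bS u v (Suc m) = q3poch (Suc m) * fps_X ^ (Suc m + 3 * tri (Suc m)) * CC u v $ Suc m"
proof (induction m)
  case 0
  have "fps_X * (CC u v $ 1 * (1 - fps_X ^ 3)) = fps_X * (fps_const u + fps_const v * fps_X + fps_const (u * v) * fps_X ^ 2)"
    by (simp only: CC_1)
  also have "\<dots> = bS u v 1" by (simp only: bS_1) (simp add: algebra_simps power2_eq_square power3_eq_cube)
  finally have "bS u v 1 = fps_X * (CC u v $ 1 * (1 - fps_X ^ 3))" ..
  thus ?case by (simp add: bS_0 CC_0 q3poch_Suc mult_ac)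
next
  case (Suc m)
  define x :: "'a fps" where "x = fps_X"
  define z :: "'a fps" where "z = fps_X ^ (3 * m)"
  define p :: "'a fps" where "p = q3poch m"
  define l :: "'a fps" where "l = fps_X ^ (m + 3 * tri m)"
  define a where "a = fps_const u"
  define b where "b = fps_const v"
  have ab: "fps_const (u * v) = a * b" by (simp add: a_def b_def)
  have pw1: "fps_X ^ (3 * Suc m) = x ^ 3 * z"
    by (simp add: x_def z_def power_add[symmetric])
  have pw2: "fps_X ^ (6 * Suc m) = x ^ 6 * z ^ 2"
    by (simp add: x_def z_def power_add[symmetric] power_mult[symmetric])
  have pw3: "fps_X ^ (3 * Suc (Suc m)) = x ^ 6 * z"
    by (simp add: x_def z_def power_add[symmetric])
  have pw4: "fps_X ^ (Suc m + 3 * tri (Suc m)) = x * z * l"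
    by (simp add: x_def z_def l_def power_add[symmetric] algebra_simps)
  have pw5: "fps_X ^ (Suc (Suc m) + 3 * tri (Suc (Suc m))) = x ^ 5 * z ^ 2 * l"
    by (simp add: x_def z_def l_def power_add[symmetric] power_mult[symmetric] algebra_simps)
  have pw6: "fps_X ^ (3 * m) = z" by (simp add: z_def)
  have q1: "q3poch (Suc m) = p * (1 - x ^ 3 * z)" by (simp only: q3poch_Suc p_def pw1)
  have q2: "q3poch (Suc (Suc m)) = p * (1 - x ^ 3 * z) * (1 - x ^ 6 * z)"
    by (simp only: q3poch_Suc[of "Suc m"] q1 pw3)
  have s0: "bS u v m = p * l * CC u v $ m" using Suc.IH by (simp add: p_def l_def)
  have s1: "bS u v (Suc m) = p * (1 - x ^ 3 * z) * (x * z * l) * CC u v $ Suc m"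
    using Suc.IH by (simp only: q1 pw4)
  have rec: "CC u v $ Suc (Suc m) * (1 - x ^ 6 * z) =
       (a + b * x + a * b * x ^ 2 * (x ^ 3 * z)) * CC u v $ Suc m - a * b * x * CC u v $ m"
    using CC_rec[of u v m] unfolding pw1[unfolded x_def] pw3[unfolded x_def] ab
    by (simp add: a_def b_def x_def)
  have "bS u v (Suc (Suc m)) = bR u v 1 (Suc (Suc m)) + bR u v 2 (Suc (Suc m)) + bR u v 3 (Suc (Suc m))"
    by (rule bS_split)
  also have "\<dots> = a * x * (x ^ 3 * z) * bS u v (Suc m)
      + b * x ^ 2 * (x ^ 6 * z ^ 2 * (a * x * z * bS u v m) + x ^ 3 * z * (bS u v (Suc m) - a * x * z * bS u v m))
      + a * b * x ^ 3 * (x ^ 6 * z ^ 2) * bS u v (Suc m)"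
    unfolding bR2_rec bR1_gen bR3_gen pw1 pw2 pw6 ab
    by (simp add: a_def b_def x_def power2_eq_square)
  also have "\<dots> = p * (1 - x ^ 3 * z) * (1 - x ^ 6 * z) * (x ^ 5 * z ^ 2 * l) * CC u v $ Suc (Suc m)"
    by (rule alg_step[OF s0 s1 rec])
  also have "\<dots> = q3poch (Suc (Suc m)) * fps_X ^ (Suc (Suc m) + 3 * tri (Suc (Suc m))) * CC u v $ Suc (Suc m)"
    by (simp only: q2 pw5)
  finally show ?case using Suc.IH by simp
qed

lemma bS_closed: "bS u v n * iv n = fps_X ^ (n + 3 * tri n) * CC u v $ n"
proof -
  have "bS u v n * iv n = (q3poch n * iv n) * fps_X ^ (n + 3 * tri n) * CC u v $ n"
    using bS_closed_aux[of n] by (simp add: mult_ac)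
  thus ?thesis by simp
qed

end

lemma tri_add: "tri (a + b) = tri a + tri b + a * b"
  by (induction b) (simp_all add: algebra_simps)

lemma expo:
  assumes "k \<le> m" "k \<le> l"
  shows "(m + l - k + 3 * tri (m + l - k)) + (l - k) + (2 * k + 3 * tri k)
       = (m + 3 * tri m) + (l + (l + 3 * tri l)) + 3 * ((m - k) * (l - k))"
proof -
  obtain a b where ab: "m = k + a" "l = k + b" using assms le_Suc_ex by blast
  have "m + l - k = k + a + b" using ab by simp
  thus ?thesis unfolding ab by (simp add: tri_add algebra_simps)
qed

definition ell :: "nat \<Rightarrow> 'a::comm_ring_1 fps" where "ell n = fps_X ^ (n + 3 * tri n)"

context
  fixes u v :: "'a::field"
begin

lemma vdm_terms:
  "ell m * ca u m * (ell l * cb v l)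
     = (\<Sum>k\<le>min m l. ell (m + l - k) * ca u (m - k) * cb v (l - k) * ce u v k)"
proof -
  define K where "K = fps_const (u ^ m * v ^ l) * (fps_X ^ ((m + 3 * tri m) + (l + (l + 3 * tri l))) :: 'a fps)"
  have t: "ell (m + l - k) * ca u (m - k) * cb v (l - k) * ce u v k
      = K * (fps_X ^ (3 * ((m - k) * (l - k))) * iv (m - k) * iv (l - k) * iv k)" if k: "k \<le> min m l" for k
  proof -
    have c: "u ^ (m - k) * v ^ (l - k) * (u * v) ^ k = u ^ m * v ^ l"
    proof -
      have "u ^ m = u ^ (m - k) * u ^ k" "v ^ l = v ^ (l - k) * v ^ k"
        using k by (simp_all add: power_add[symmetric])
      thus ?thesis by (simp add: power_mult_distrib mult_ac)
    qed
    have e: "fps_X ^ (m + l - k + 3 * tri (m + l - k)) * fps_X ^ (l - k) * fps_X ^ (2 * k + 3 * tri k)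
        = fps_X ^ ((m + 3 * tri m) + (l + (l + 3 * tri l))) * (fps_X ^ (3 * ((m - k) * (l - k))) :: 'a fps)"
      using expo[of k m l] k by (simp only: power_add[symmetric])
    have "ell (m + l - k) * ca u (m - k) * cb v (l - k) * ce u v k
       = (fps_const (u ^ (m - k)) * fps_const (v ^ (l - k)) * fps_const ((u * v) ^ k))
         * (fps_X ^ (m + l - k + 3 * tri (m + l - k)) * fps_X ^ (l - k) * fps_X ^ (2 * k + 3 * tri k))
         * (iv (m - k) * iv (l - k) * iv k)"
      by (simp only: ell_def ca_def cb_def ce_def mult_ac)
    also have "\<dots> = K * (fps_X ^ (3 * ((m - k) * (l - k))) * iv (m - k) * iv (l - k) * iv k)"
      unfolding e fps_const_mult c K_def by (simp only: mult_ac)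
    finally show ?thesis .
  qed
  have "(\<Sum>k\<le>min m l. ell (m + l - k) * ca u (m - k) * cb v (l - k) * ce u v k)
      = (\<Sum>k\<le>min m l. K * (fps_X ^ (3 * ((m - k) * (l - k))) * iv (m - k) * iv (l - k) * iv k))"
    by (rule sum.cong) (simp_all add: t)
  also have "\<dots> = K * (iv m * iv l)" by (simp add: sum_distrib_left[symmetric] vdm_iv)
  also have "\<dots> = ell m * ca u m * (ell l * cb v l)"
  proof -
    have "ell m * ca u m * (ell l * cb v l) = (fps_const (u ^ m) * fps_const (v ^ l))
        * (fps_X ^ (m + 3 * tri m) * (fps_X ^ (l + 3 * tri l) * fps_X ^ l)) * (iv m * iv l)"
      by (simp only: ell_def ca_def cb_def mult_ac)
    also have "\<dots> = K * (iv m * iv l)"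
      unfolding K_def fps_const_mult by (simp only: power_add[symmetric] add.commute[of "l + 3 * tri l" l])
    finally show ?thesis by simp
  qed
  finally show ?thesis by simp
qed

end

context
  fixes u v :: "'a::field"
begin

definition T3 :: "nat \<Rightarrow> nat \<Rightarrow> nat \<Rightarrow> 'a fps" where
  "T3 i j k = ell (i + j + k) * ca u i * cb v j * ce u v k"

lemma CC_nth: "CC u v $ n = (\<Sum>p=0..n. \<Sum>i=0..p. ca u i * cb v (p - i) * ce u v (n - p))"
  by (simp add: CC_def fps_mult_nth sum_distrib_right AA_def BB_def EE_def)

lemma lhs_triple:
  "(\<Sum>n\<le>N. ell n * CC u v $ n) = (\<Sum>(i,j,k)\<in>{(i,j,k). i + j + k \<le> N}. T3 i j k)"
proof -
  have "(\<Sum>n\<le>N. ell n * CC u v $ n) = (\<Sum>n\<le>N. \<Sum>p\<in>{0..n}. \<Sum>i\<in>{0..p}. T3 i (p - i) (n - p))"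
  proof (rule sum.cong)
    fix n assume "n \<in> {..N}"
    have "ell n * CC u v $ n = (\<Sum>p\<in>{0..n}. \<Sum>i\<in>{0..p}. ell n * (ca u i * cb v (p - i) * ce u v (n - p)))"
      by (simp add: CC_nth sum_distrib_left)
    also have "\<dots> = (\<Sum>p\<in>{0..n}. \<Sum>i\<in>{0..p}. T3 i (p - i) (n - p))"
      by (intro sum.cong refl) (auto simp: T3_def mult_ac)
    finally show "ell n * CC u v $ n = (\<Sum>p\<in>{0..n}. \<Sum>i\<in>{0..p}. T3 i (p - i) (n - p))" .
  qed simp
  also have "\<dots> = (\<Sum>n\<le>N. \<Sum>(p,i)\<in>(SIGMA p:{0..n}. {0..p}). T3 i (p - i) (n - p))"
    by (intro sum.cong refl sum.Sigma) auto
  also have "\<dots> = (\<Sum>(n,pi)\<in>(SIGMA n:{..N}. SIGMA p:{0..n}. {0..p}). (case pi of (p,i) \<Rightarrow> T3 i (p - i) (n - p)))"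
    by (subst sum.Sigma) (auto simp: case_prod_beta)
  also have "\<dots> = (\<Sum>(i,j,k)\<in>{(i,j,k). i + j + k \<le> N}. T3 i j k)"
    by (rule sum.reindex_bij_witness[where j="\<lambda>(n,p,i). (i, p - i, n - p)" and i="\<lambda>(a,b,c). (a + b + c, a + b, a)"])
       auto
  finally show ?thesis .
qed

lemma rhs_triple:
  "(\<Sum>m\<le>N. ell m * ca u m) * (\<Sum>l\<le>N. ell l * cb v l)
     = (\<Sum>(i,j,k)\<in>{(i,j,k). i + k \<le> N \<and> j + k \<le> N}. T3 i j k)"
proof -
  have "(\<Sum>m\<le>N. ell m * ca u m) * (\<Sum>l\<le>N. ell l * cb v l)
      = (\<Sum>m\<le>N. \<Sum>l\<le>N. ell m * ca u m * (ell l * cb v l))"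
    by (simp add: sum_product)
  also have "\<dots> = (\<Sum>m\<le>N. \<Sum>l\<le>N. \<Sum>k\<le>min m l. T3 (m - k) (l - k) k)"
  proof (intro sum.cong refl)
    fix m l
    have "ell m * ca u m * (ell l * cb v l) = (\<Sum>k\<le>min m l. ell (m + l - k) * ca u (m - k) * cb v (l - k) * ce u v k)"
      by (rule vdm_terms)
    also have "\<dots> = (\<Sum>k\<le>min m l. T3 (m - k) (l - k) k)"
      by (rule sum.cong) (auto simp: T3_def)
    finally show "ell m * ca u m * (ell l * cb v l) = (\<Sum>k\<le>min m l. T3 (m - k) (l - k) k)" .
  qed
  also have "\<dots> = (\<Sum>m\<le>N. \<Sum>(l,k)\<in>(SIGMA l:{..N}. {..min m l}). T3 (m - k) (l - k) k)"
    by (intro sum.cong refl sum.Sigma) auto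
  also have "\<dots> = (\<Sum>(m,lk)\<in>(SIGMA m:{..N}. SIGMA l:{..N}. {..min m l}). (case lk of (l,k) \<Rightarrow> T3 (m - k) (l - k) k))"
    by (subst sum.Sigma) (auto simp: case_prod_beta)
  also have "\<dots> = (\<Sum>(i,j,k)\<in>{(i,j,k). i + k \<le> N \<and> j + k \<le> N}. T3 i j k)"
    by (rule sum.reindex_bij_witness[where j="\<lambda>(m,l,k). (m - k, l - k, k)" and i="\<lambda>(a,b,c). (a + c, b + c, c)"])
       auto
  finally show ?thesis .
qed

lemma regroup:
  "eqN N (\<Sum>n\<le>N. ell n * CC u v $ n) ((\<Sum>m\<le>N. ell m * ca u m) * (\<Sum>l\<le>N. ell l * cb v l))"
proof -
  define S1 where "S1 = {(i,j,k). i + j + k \<le> N}"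
  define S2 where "S2 = {(i,j,k). i + k \<le> N \<and> j + k \<le> N}"
  have sub: "S1 \<subseteq> S2" by (auto simp: S1_def S2_def)
  have fin: "finite S2"
    by (rule finite_subset[of _ "{..N} \<times> {..N} \<times> {..N}"]) (auto simp: S2_def)
  have "(\<Sum>(i,j,k)\<in>S2. T3 i j k) = (\<Sum>(i,j,k)\<in>S2 - S1. T3 i j k) + (\<Sum>(i,j,k)\<in>S1. T3 i j k)"
    by (rule sum.subset_diff[OF sub fin])
  moreover have "eqN N (\<Sum>(i,j,k)\<in>S2 - S1. T3 i j k) (\<Sum>(i,j,k)\<in>S2 - S1. 0)"
  proof (rule eqN_sum)
    fix x assume "x \<in> S2 - S1"
    then obtain i j k where x: "x = (i,j,k)" "N < i + j + k" by (cases x) (auto simp: S1_def)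
    have "T3 i j k = fps_X ^ (i + j + k + 3 * tri (i + j + k)) * (ca u i * cb v j * ce u v k)"
      by (simp add: T3_def ell_def mult_ac)
    thus "eqN N (case x of (i,j,k) \<Rightarrow> T3 i j k) (case x of (i,j,k) \<Rightarrow> 0)"
      using eqN_Xpow[of N "i + j + k + 3 * tri (i + j + k)"] x by simp
  qed
  ultimately have "eqN N (\<Sum>(i,j,k)\<in>S2. T3 i j k) (\<Sum>(i,j,k)\<in>S1. T3 i j k)"
    using eqN_add[OF _ eqN_refl] by fastforce
  thus ?thesis using lhs_triple[of N] rhs_triple[of N] unfolding S1_def S2_def
    by (simp add: eqN_sym)
qed

end

context
  fixes u v :: "'a::field"
begin

lemma lhs_eqN:
  assumes "N < M"
  shows "eqN N (\<Sum>n<M. bS u v n * inverse (q3poch n)) (\<Sum>n\<le>N. ell n * CC u v $ n)"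
proof -
  have "(\<Sum>n<M. bS u v n * inverse (q3poch n)) = (\<Sum>n<M. ell n * CC u v $ n)"
    by (rule sum.cong) (simp_all add: bS_closed[unfolded iv_def] ell_def)
  also have "\<dots> = (\<Sum>n\<le>N. ell n * CC u v $ n) + (\<Sum>n\<in>{N<..<M}. ell n * CC u v $ n)"
  proof -
    have se: "{..<M} = {..N} \<union> {N<..<M}" using assms by auto
    have "(\<Sum>n\<in>{..N} \<union> {N<..<M}. ell n * CC u v $ n) = (\<Sum>n\<le>N. ell n * CC u v $ n) + (\<Sum>n\<in>{N<..<M}. ell n * CC u v $ n)"
      by (rule sum.union_disjoint) auto
    thus ?thesis unfolding se .
  qed
  finally have e: "(\<Sum>n<M. bS u v n * inverse (q3poch n)) = \<dots>" .
  have "eqN N (\<Sum>n\<in>{N<..<M}. ell n * CC u v $ n) (\<Sum>n\<in>{N<..<M}. 0)"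
  proof (rule eqN_sum)
    fix n assume "n \<in> {N<..<M}"
    thus "eqN N (ell n * CC u v $ n) 0" unfolding ell_def by (intro eqN_Xpow) auto
  qed
  hence "eqN N ((\<Sum>n\<le>N. ell n * CC u v $ n) + (\<Sum>n\<in>{N<..<M}. ell n * CC u v $ n)) ((\<Sum>n\<le>N. ell n * CC u v $ n) + 0)"
    by (intro eqN_add eqN_refl) simp
  thus ?thesis unfolding e by simp
qed

lemma rhs_split:
  "(\<Prod>j\<in>{1..M}. (1 + fps_const u * fps_X ^ (3 * j - 2)) * (1 + fps_const v * fps_X ^ (3 * j - 1)))
    = (\<Prod>j<M. 1 + (fps_const u * fps_X ^ 1) * fps_X ^ (3 * j)) * (\<Prod>j<M. 1 + (fps_const v * fps_X ^ 2) * fps_X ^ (3 * j))"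
proof -
  have "(\<Prod>j\<in>{1..M}. (1 + fps_const u * fps_X ^ (3 * j - 2)) * (1 + fps_const v * fps_X ^ (3 * j - 1)))
     = (\<Prod>j<M. (1 + fps_const u * fps_X ^ (3 * Suc j - 2)) * (1 + fps_const v * fps_X ^ (3 * Suc j - 1)))"
    using prod.atLeast1_atMost_eq[of "\<lambda>j. (1 + fps_const u * fps_X ^ (3 * j - 2)) * (1 + fps_const v * fps_X ^ (3 * j - 1))" M]
    by simp
  also have "\<dots> = (\<Prod>j<M. (1 + (fps_const u * fps_X ^ 1) * fps_X ^ (3 * j)) * (1 + (fps_const v * fps_X ^ 2) * fps_X ^ (3 * j)))"
  proof (rule prod.cong)
    fix j :: nat
    have "3 * Suc j - 2 = 1 + 3 * j" "3 * Suc j - 1 = 2 + 3 * j" by simp_all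
    thus "(1 + fps_const u * fps_X ^ (3 * Suc j - 2)) * (1 + fps_const v * fps_X ^ (3 * Suc j - 1))
       = (1 + (fps_const u * fps_X ^ 1) * fps_X ^ (3 * j)) * (1 + (fps_const v * fps_X ^ 2) * fps_X ^ (3 * j))"
      by (simp only: power_add mult.assoc)
  qed simp
  finally show ?thesis by (simp only: prod.distrib)
qed

lemma euler_u: "(fps_const u * fps_X) ^ m * fps_X ^ (3 * tri m) * iv m = ell m * ca u m"
  by (simp add: ell_def ca_def power_mult_distrib power_add mult_ac)

lemma euler_v: "(fps_const v * fps_X ^ 2) ^ m * fps_X ^ (3 * tri m) * iv m = ell m * cb v m"
proof -
  have "(fps_X ^ 2) ^ m = (fps_X ^ m * fps_X ^ m :: 'a fps)" by (simp add: power_mult[symmetric] power_add[symmetric] mult_2)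
  thus ?thesis by (simp add: ell_def cb_def power_mult_distrib power_add mult_ac)
qed

lemma rhs_eqN:
  assumes "2 * N < M"
  shows "eqN N (\<Prod>j\<in>{1..M}. (1 + fps_const u * fps_X ^ (3 * j - 2)) * (1 + fps_const v * fps_X ^ (3 * j - 1)))
           ((\<Sum>m\<le>N. ell m * ca u m) * (\<Sum>l\<le>N. ell l * cb v l))"
  unfolding rhs_split
  using eqN_mult[OF euler_eqN[of 1 N M u] euler_eqN[of 2 N M v]] assms
  by (simp add: euler_u euler_v)

end

theorem theorem11:
  fixes u v :: "'a::field"
  shows "\<exists>L :: 'a fps.
     (\<lambda>m. \<Sum>n<m. bS u v n * inverse (q3poch n)) \<longlonglongrightarrow> L \<and>
     (\<lambda>m. \<Prod>j\<in>{1..m}. (1 + fps_const u * fps_X ^ (3 * j - 2)) *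
                        (1 + fps_const v * fps_X ^ (3 * j - 1))) \<longlonglongrightarrow> L"
proof -
  define G where "G N = (\<Sum>m\<le>N. ell m * ca u m) * (\<Sum>l\<le>N. ell l * cb v l)" for N
  define L where "L = Abs_fps (\<lambda>N. G N $ N)"
  have 1: "(\<lambda>m. \<Sum>n<m. bS u v n * inverse (q3poch n)) \<longlonglongrightarrow> L"
  proof (rule tendsto_fpsI)
    fix N
    show "\<forall>\<^sub>F m in sequentially. (\<Sum>n<m. bS u v n * inverse (q3poch n)) $ N = L $ N"
      unfolding eventually_sequentially
    proof (intro exI allI impI)
      fix m assume "Suc N \<le> m"
      hence "eqN N (\<Sum>n<m. bS u v n * inverse (q3poch n)) (G N)"
        using eqN_trans[OF lhs_eqN[of N m u v] regroup[of N u v]] by (simp add: G_def)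
      thus "(\<Sum>n<m. bS u v n * inverse (q3poch n)) $ N = L $ N" by (simp add: eqN_def L_def)
    qed
  qed
  have 2: "(\<lambda>m. \<Prod>j\<in>{1..m}. (1 + fps_const u * fps_X ^ (3 * j - 2)) *
                        (1 + fps_const v * fps_X ^ (3 * j - 1))) \<longlonglongrightarrow> L"
  proof (rule tendsto_fpsI)
    fix N
    show "\<forall>\<^sub>F m in sequentially. (\<Prod>j\<in>{1..m}. (1 + fps_const u * fps_X ^ (3 * j - 2)) *
                        (1 + fps_const v * fps_X ^ (3 * j - 1))) $ N = L $ N"
      unfolding eventually_sequentially
    proof (intro exI allI impI)
      fix m assume "Suc (2 * N) \<le> m"
      hence "eqN N (\<Prod>j\<in>{1..m}. (1 + fps_const u * fps_X ^ (3 * j - 2)) *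
                        (1 + fps_const v * fps_X ^ (3 * j - 1))) (G N)"
        using rhs_eqN[of N m u v] by (simp add: G_def)
      thus "(\<Prod>j\<in>{1..m}. (1 + fps_const u * fps_X ^ (3 * j - 2)) *
                        (1 + fps_const v * fps_X ^ (3 * j - 1))) $ N = L $ N" by (simp add: eqN_def L_def)
    qed
  qed
  from 1 2 show ?thesis by blast
qed

end
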